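(* Let \[P=\{(x,y)\in[0,3]^3\times[0,1]^3 : x_1+x_2+x_3=4,\ x_i\le 4y_i \text{ for } i=1,2,3\},\] \[P_U=\{(x,y,z)\in\mathbb{R}^3\times\mathbb{R}^3\times[0,1]^{3\times3} : (x,y)\in P,\ x_i=z_{i1}+2z_{i2}+3z_{i3},\ z_{i1}+z_{i2}+z_{i3}\le1 \text{ for } i=1,2,3\},\] \[P_{L+}=\{(x,y,z)\in\mathbb{R}^3\times\mathbb{R}^3\times[0,1]^{3\times2} : (x,y)\in P,\ x_i=z_{i1}+2z_{i2} \text{ for } i=1,2,3\},\] where all variables ($x$, $y$ and $z$) are integer variables. Then \[\operatorname{proj}_{x,y}\big(\mathrm{SC}(P_U)\big)\subsetneq\operatorname{proj}_{x,y}\big(\mathrm{SC}(P_{L+})\big).\]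
   Context: For $X\subseteq\mathbb{R}^N$ with all coordinates integer, the split closure is $\mathrm{SC}(X)=\bigcap\mathrm{conv}(X\setminus S)$, the intersection over all split sets $S=\{w\in\mathbb{R}^N:\pi_0<\pi^Tw<\pi_0+1\}$ with $\pi\in\mathbb{Z}^N$, $\pi_0\in\mathbb{Z}$. $\operatorname{proj}_{x,y}$ is orthogonal projection onto the $(x,y)$-coordinates. *)

theory Defs
  imports "HOL-Analysis.Analysis" "HOL-Library.Numeral_Type"
begin

definition split_closure :: "(real^'n) set \<Rightarrow> (real^'n) set" where
  "split_closure X =
     (\<Inter>\<pi>\<in>{\<pi>::real^'n. \<forall>i. \<pi> $ i \<in> \<int>}. \<Inter>\<pi>0::int.
        convex hull (X - {w. of_int \<pi>0 < \<pi> \<bullet> w \<and> \<pi> \<bullet> w < of_int \<pi>0 + 1}))"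

text \<open>The elements of the numeral type 3 are written 1, 2, 3 (where 3 = 0 in that type).\<close>
definition xc :: "real^(3 + 3 + (3 \<times> 'm::finite)) \<Rightarrow> 3 \<Rightarrow> real" where
  "xc v i = v $ Inl i"
definition yc :: "real^(3 + 3 + (3 \<times> 'm::finite)) \<Rightarrow> 3 \<Rightarrow> real" where
  "yc v i = v $ Inr (Inl i)"
definition zc :: "real^(3 + 3 + (3 \<times> 'm::finite)) \<Rightarrow> 3 \<Rightarrow> 'm \<Rightarrow> real" where
  "zc v i j = v $ Inr (Inr (i, j))"

definition proj_xy :: "real^(3 + 3 + (3 \<times> 'm::finite)) \<Rightarrow> real^(3 + 3)" where
  "proj_xy v = (\<chi> k. case k of Inl i \<Rightarrow> xc v i | Inr i \<Rightarrow> yc v i)"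

definition inP :: "(3 \<Rightarrow> real) \<Rightarrow> (3 \<Rightarrow> real) \<Rightarrow> bool" where
  "inP x y \<longleftrightarrow>
     (\<forall>i. 0 \<le> x i \<and> x i \<le> 3 \<and> 0 \<le> y i \<and> y i \<le> 1 \<and> x i \<le> 4 * y i) \<and>
     x 1 + x 2 + x 3 = 4"

definition P_U :: "(real^(3 + 3 + (3 \<times> 3))) set" where
  "P_U = {v. inP (xc v) (yc v) \<and>
            (\<forall>i j. 0 \<le> zc v i j \<and> zc v i j \<le> 1) \<and>
            (\<forall>i. xc v i = zc v i 1 + 2 * zc v i 2 + 3 * zc v i 3 \<and>
                 zc v i 1 + zc v i 2 + zc v i 3 \<le> 1)}"

definition P_Lplus :: "(real^(3 + 3 + (3 \<times> 2))) set" where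
  "P_Lplus = {v. inP (xc v) (yc v) \<and>
            (\<forall>i j. 0 \<le> zc v i j \<and> zc v i j \<le> 1) \<and>
            (\<forall>i. xc v i = zc v i 1 + 2 * zc v i 2)}"

end

theory Submission
  imports Defs
begin

lemma sum_UNIV_plus:
  fixes f :: "('a::finite + 'b::finite) \<Rightarrow> real"
  shows "(\<Sum>k\<in>UNIV. f k) = (\<Sum>i\<in>UNIV. f (Inl i)) + (\<Sum>j\<in>UNIV. f (Inr j))"
proof -
  have "(\<Sum>k\<in>UNIV. f k) = (\<Sum>k\<in>Inl ` UNIV \<union> Inr ` UNIV. f k)" by (simp only: UNIV_sum[symmetric])
  also have "\<dots> = (\<Sum>k\<in>Inl ` UNIV. f k) + (\<Sum>k\<in>Inr ` UNIV. f k)"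
    by (rule sum.union_disjoint) auto
  also have "\<dots> = (\<Sum>i\<in>UNIV. f (Inl i)) + (\<Sum>j\<in>UNIV. f (Inr j))"
    by (simp add: sum.reindex)
  finally show ?thesis .
qed

lemma sum_UNIV_prod:
  fixes f :: "('a::finite \<times> 'b::finite) \<Rightarrow> real"
  shows "(\<Sum>k\<in>UNIV. f k) = (\<Sum>i\<in>UNIV. \<Sum>j\<in>UNIV. f (i,j))"
  by (simp add: sum.cartesian_product UNIV_Times_UNIV[symmetric] del: UNIV_Times_UNIV)

lemma inner_exp:
  fixes \<pi> v :: "real^(3+3+(3\<times>'m::finite))"
  shows "\<pi> \<bullet> v = (\<Sum>i\<in>UNIV. \<pi>$Inl i * v$Inl i) + (\<Sum>i\<in>UNIV. \<pi>$Inr(Inl i) * v$Inr(Inl i))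
     + (\<Sum>i\<in>UNIV. \<Sum>j\<in>UNIV. \<pi>$Inr(Inr(i,j)) * v$Inr(Inr(i,j)))"
  unfolding inner_vec_def inner_real_def
  by (simp add: sum_UNIV_plus sum_UNIV_prod add.assoc)

lemma sc_mem:
  assumes "v \<in> split_closure X" "\<forall>k. \<pi>$k \<in> \<int>"
  shows "v \<in> convex hull (X - {w. of_int \<pi>0 < \<pi> \<bullet> w \<and> \<pi> \<bullet> w < of_int \<pi>0 + 1})"
  using assms unfolding split_closure_def by blast

definition pis :: "real^(3+3+(3\<times>3))" where
  "pis = (\<chi> k. case k of Inr (Inr _) \<Rightarrow> 1 | _ \<Rightarrow> 0)"
definition piw :: "3 \<Rightarrow> real^(3+3+(3\<times>3))" where
  "piw i0 = (\<chi> k. case k of Inr (Inl i) \<Rightarrow> (if i = i0 then -1 else 0)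
      | Inr (Inr (i,j)) \<Rightarrow> (if i = i0 then 1 else 0) | _ \<Rightarrow> 0)"

lemma pis_int: "\<forall>k. pis$k \<in> \<int>"
  unfolding pis_def by (auto split: sum.split)
lemma piw_int: "\<forall>k. piw i0 $k \<in> \<int>"
  unfolding piw_def by (simp split: sum.split prod.split)

lemma pis_inner: "pis \<bullet> v = (\<Sum>i\<in>UNIV. \<Sum>j\<in>UNIV. zc v i j)"
  unfolding inner_exp pis_def zc_def by simp

lemma piw_inner: "piw i0 \<bullet> v = zc v i0 1 + zc v i0 2 + zc v i0 3 - yc v i0"
  using exhaust_3[of i0]
  unfolding inner_exp piw_def zc_def yc_def by (auto simp: sum_3)

lemma PU_s: "convex hull (P_U - {w. of_int 1 < pis \<bullet> w \<and> pis \<bullet> w < of_int 1 + 1}) \<subseteq> {w. pis \<bullet> w \<ge> 2}"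
proof (rule hull_minimal)
  show "convex {w. pis \<bullet> w \<ge> 2}" by (rule convex_halfspace_ge)
  show "P_U - {w. of_int 1 < pis \<bullet> w \<and> pis \<bullet> w < of_int 1 + 1} \<subseteq> {w. pis \<bullet> w \<ge> 2}"
  proof
    fix v assume v: "v \<in> P_U - {w. of_int 1 < pis \<bullet> w \<and> pis \<bullet> w < of_int 1 + 1}"
    then have "v \<in> P_U" by auto
    then have h: "\<forall>i. xc v i = zc v i 1 + 2 * zc v i 2 + 3 * zc v i 3 \<and> zc v i 1 + zc v i 2 + zc v i 3 \<le> 1"
      "\<forall>i j. 0 \<le> zc v i j" "xc v 1 + xc v 2 + xc v 3 = 4"
      unfolding P_U_def inP_def by auto
    have "pis \<bullet> v \<le> 1 \<or> pis \<bullet> v \<ge> 2" using v by auto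
    moreover have "pis \<bullet> v = zc v 1 1 + zc v 1 2 + zc v 1 3 + zc v 2 1 + zc v 2 2 + zc v 2 3 + zc v 3 1 + zc v 3 2 + zc v 3 3"
      unfolding pis_inner by (simp add: sum_3)
    moreover have "zc v 1 1 + 2 * zc v 1 2 + 3 * zc v 1 3 + (zc v 2 1 + 2 * zc v 2 2 + 3 * zc v 2 3)
       + (zc v 3 1 + 2 * zc v 3 2 + 3 * zc v 3 3) = 4" using h(3) h(1)[rule_format, of 1] h(1)[rule_format, of 2] h(1)[rule_format, of 3] by linarith
    moreover have "zc v 1 1 + zc v 1 2 + zc v 1 3 \<le> 1" "zc v 2 1 + zc v 2 2 + zc v 2 3 \<le> 1"
       "zc v 3 1 + zc v 3 2 + zc v 3 3 \<le> 1" using h(1) by auto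
    moreover note h(2)[rule_format, of 1 1] h(2)[rule_format, of 1 2] h(2)[rule_format, of 1 3]
      h(2)[rule_format, of 2 1] h(2)[rule_format, of 2 2] h(2)[rule_format, of 2 3]
      h(2)[rule_format, of 3 1] h(2)[rule_format, of 3 2] h(2)[rule_format, of 3 3]
    ultimately have "pis \<bullet> v \<ge> 2" by linarith
    then show "v \<in> {w. pis \<bullet> w \<ge> 2}" by simp
  qed
qed

lemma PU_w: "convex hull (P_U - {w. of_int 0 < piw i0 \<bullet> w \<and> piw i0 \<bullet> w < of_int 0 + 1}) \<subseteq> {w. piw i0 \<bullet> w \<le> 0}"
proof (rule hull_minimal)
  show "convex {w. piw i0 \<bullet> w \<le> 0}" by (rule convex_halfspace_le)
  show "P_U - {w. of_int 0 < piw i0 \<bullet> w \<and> piw i0 \<bullet> w < of_int 0 + 1} \<subseteq> {w. piw i0 \<bullet> w \<le> 0}"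
  proof
    fix v assume v: "v \<in> P_U - {w. of_int 0 < piw i0 \<bullet> w \<and> piw i0 \<bullet> w < of_int 0 + 1}"
    then have "v \<in> P_U" by auto
    then have h: "xc v i0 = zc v i0 1 + 2 * zc v i0 2 + 3 * zc v i0 3" "zc v i0 1 + zc v i0 2 + zc v i0 3 \<le> 1"
      "0 \<le> zc v i0 1" "0 \<le> zc v i0 2" "0 \<le> zc v i0 3" "0 \<le> yc v i0" "xc v i0 \<le> 4 * yc v i0"
      unfolding P_U_def inP_def by auto
    have "piw i0 \<bullet> v \<le> 0 \<or> piw i0 \<bullet> v \<ge> 1" using v by auto
    with h show "v \<in> {w. piw i0 \<bullet> w \<le> 0}"
      unfolding piw_inner mem_Collect_eq by smt
  qed
qed

lemma SC_PU_ysum: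
  assumes "v \<in> split_closure P_U"
  shows "yc v 1 + yc v 2 + yc v 3 \<ge> 2"
proof -
  have "v \<in> {w. pis \<bullet> w \<ge> 2}" by (rule subsetD[OF PU_s sc_mem[OF assms pis_int]])
  then have s: "zc v 1 1 + zc v 1 2 + zc v 1 3 + zc v 2 1 + zc v 2 2 + zc v 2 3 + zc v 3 1 + zc v 3 2 + zc v 3 3 \<ge> 2"
    unfolding pis_inner by (simp add: sum_3)
  have "\<And>i. v \<in> {w. piw i \<bullet> w \<le> 0}" by (rule subsetD[OF PU_w sc_mem[OF assms piw_int]])
  then have "\<And>i. zc v i 1 + zc v i 2 + zc v i 3 - yc v i \<le> 0" unfolding piw_inner by simp
  from this[of 1] this[of 2] this[of 3] s show ?thesis by linarith
qed

definition gL :: "real \<Rightarrow> real \<Rightarrow> real \<Rightarrow> real^(3+3+(3\<times>2))" where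
 "gL a b d = (\<chi> k. case k of
     Inl i \<Rightarrow> (if i = 1 then 1+3*a-b-d else if i = 2 then 1-a+3*b-d else 2-2*a-2*b+2*d)
   | Inr (Inl i) \<Rightarrow> (if i = 1 then a else if i = 2 then b else d)
   | Inr (Inr (i,j)) \<Rightarrow> (if j = 1 then (if i = 3 then 0 else a+b+d-1)
        else (if i = 1 then 1+a-b-d else if i = 2 then 1-a+b-d else 1-a-b+d)))"

definition okL :: "real \<Rightarrow> real \<Rightarrow> real \<Rightarrow> bool" where
 "okL a b d \<longleftrightarrow> 0 \<le> a \<and> a \<le> 1 \<and> 0 \<le> b \<and> b \<le> 1 \<and> 0 \<le> d \<and> d \<le> 1 \<and>
   0 \<le> 1+3*a-b-d \<and> 1+3*a-b-d \<le> 3 \<and> 1+3*a-b-d \<le> 4*a \<and>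
   0 \<le> 1-a+3*b-d \<and> 1-a+3*b-d \<le> 3 \<and> 1-a+3*b-d \<le> 4*b \<and>
   0 \<le> 2-2*a-2*b+2*d \<and> 2-2*a-2*b+2*d \<le> 3 \<and> 2-2*a-2*b+2*d \<le> 4*d \<and>
   0 \<le> a+b+d-1 \<and> a+b+d-1 \<le> 1 \<and> 0 \<le> 1+a-b-d \<and> 1+a-b-d \<le> 1 \<and>
   0 \<le> 1-a+b-d \<and> 1-a+b-d \<le> 1 \<and> 0 \<le> 1-a-b+d \<and> 1-a-b+d \<le> 1"

lemma gL_mem: "okL a b d \<Longrightarrow> gL a b d \<in> P_Lplus"
  unfolding P_Lplus_def inP_def xc_def yc_def zc_def gL_def okL_def
  by (simp add: forall_3 forall_2 algebra_simps)

lemma gL_lin: "gL a b d = gL 0 0 0 + a *\<^sub>R (gL 1 0 0 - gL 0 0 0) + b *\<^sub>R (gL 0 1 0 - gL 0 0 0)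
   + d *\<^sub>R (gL 0 0 1 - gL 0 0 0)"
  unfolding vec_eq_iff gL_def by (auto split: sum.split simp: algebra_simps)

lemma gL_mid: "(1/2) *\<^sub>R gL a b d + (1/2) *\<^sub>R gL a' b' d' = gL ((a+a')/2) ((b+b')/2) ((d+d')/2)"
  unfolding vec_eq_iff gL_def by (auto split: sum.split simp: field_simps)

lemma gL_int: "a \<in> \<int> \<Longrightarrow> b \<in> \<int> \<Longrightarrow> d \<in> \<int> \<Longrightarrow> gL a b d $ k \<in> \<int>"
  unfolding gL_def by (auto split: sum.split)


lemma int_inner: "\<forall>k. \<pi>$k \<in> \<int> \<Longrightarrow> \<forall>k. (u::real^'n)$k \<in> \<int> \<Longrightarrow> \<pi> \<bullet> u \<in> \<int>"
  unfolding inner_vec_def inner_real_def by (auto intro!: Ints_sum Ints_mult)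

lemma int_not_strip: "\<not> (real_of_int p0 < real_of_int n \<and> real_of_int n < real_of_int p0 + 1)"
proof
  assume h: "real_of_int p0 < real_of_int n \<and> real_of_int n < real_of_int p0 + 1"
  then have "p0 < n" by simp
  moreover have "n < p0 + 1" using h by (metis of_int_1 of_int_add of_int_less_iff)
  ultimately show False by simp
qed

lemma far_not_strip: "real_of_int p0 < s \<Longrightarrow> s < real_of_int p0 + 1 \<Longrightarrow> \<bar>e\<bar> \<ge> 1 \<Longrightarrow>
   \<not> (real_of_int p0 < s + e \<and> s + e < real_of_int p0 + 1) \<and> \<not> (real_of_int p0 < s - e \<and> s - e < real_of_int p0 + 1)"
  by (cases "e \<ge> 0") auto

lemma okL_cube: "a \<in> {1/3, 2/3} \<Longrightarrow> b \<in> {1/3, 2/3} \<Longrightarrow> d \<in> {1/3, 2/3} \<Longrightarrow> okL a b d"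
  unfolding okL_def by auto

lemma okL_axes: "okL 0 (1/2) (1/2)" "okL 1 (1/2) (1/2)" "okL (1/2) 0 (1/2)" "okL (1/2) 1 (1/2)"
   "okL (1/2) (1/2) 0" "okL (1/2) (1/2) 1" "okL (1/2) (1/2) (1/2)"
  unfolding okL_def by auto

lemma sign_cube: "k \<in> {-1, 1::int} \<Longrightarrow> 1/2 + real_of_int k / 6 \<in> {1/3, 2/3} \<and> 1/2 - real_of_int k / 6 \<in> {1/3, 2/3}"
  by auto

lemma qL_SC: "gL (1/2) (1/2) (1/2) \<in> split_closure P_Lplus"
  unfolding split_closure_def
proof (intro InterI, clarsimp)
  fix \<pi> :: "real^(3+3+(3\<times>2))" and p0 :: int
  assume pint: "\<forall>i. \<pi> $ i \<in> \<int>"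
  define S where "S = {w. of_int p0 < \<pi> \<bullet> w \<and> \<pi> \<bullet> w < of_int p0 + (1::real)}"
  have "\<pi> \<bullet> gL 0 0 0 \<in> \<int>" by (rule int_inner[OF pint]) (auto intro: gL_int)
  then obtain kb where kb: "\<pi> \<bullet> gL 0 0 0 = of_int kb" by (auto elim: Ints_cases)
  have "\<pi> \<bullet> (gL 1 0 0 - gL 0 0 0) \<in> \<int>" by (rule int_inner[OF pint]) (auto intro!: Ints_diff gL_int)
  then obtain k1 where k1: "\<pi> \<bullet> (gL 1 0 0 - gL 0 0 0) = of_int k1" by (auto elim: Ints_cases)
  have "\<pi> \<bullet> (gL 0 1 0 - gL 0 0 0) \<in> \<int>" by (rule int_inner[OF pint]) (auto intro!: Ints_diff gL_int)
  then obtain k2 where k2: "\<pi> \<bullet> (gL 0 1 0 - gL 0 0 0) = of_int k2" by (auto elim: Ints_cases)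
  have "\<pi> \<bullet> (gL 0 0 1 - gL 0 0 0) \<in> \<int>" by (rule int_inner[OF pint]) (auto intro!: Ints_diff gL_int)
  then obtain k3 where k3: "\<pi> \<bullet> (gL 0 0 1 - gL 0 0 0) = of_int k3" by (auto elim: Ints_cases)
  define V where "V a b d = real_of_int kb + a * of_int k1 + b * of_int k2 + d * of_int k3" for a b d
  have val: "\<pi> \<bullet> gL a b d = V a b d" for a b d
    unfolding V_def using kb k1 k2 k3
    by (subst gL_lin) (simp add: inner_add_right inner_diff_right)
  define str where "str t \<longleftrightarrow> real_of_int p0 < t \<and> t < real_of_int p0 + 1" for t
  have memS: "gL a b d \<in> P_Lplus - S" if "okL a b d" "\<not> str (V a b d)" for a b d
    using that gL_mem[of a b d] by (auto simp: S_def str_def val)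
  have pair: "gL (1/2) (1/2) (1/2) \<in> convex hull (P_Lplus - S)"
    if "okL a b d" "\<not> str (V a b d)" "okL a' b' d'" "\<not> str (V a' b' d')"
       "(a+a')/2 = 1/2" "(b+b')/2 = 1/2" "(d+d')/2 = 1/2" for a b d a' b' d'
  proof -
    have "(1/2) *\<^sub>R gL a b d + (1/2) *\<^sub>R gL a' b' d' \<in> convex hull (P_Lplus - S)"
      by (rule convexD[OF convex_convex_hull hull_inc hull_inc]) (use memS that in auto)
    then show ?thesis unfolding gL_mid using that by simp
  qed
  define h :: real where "h = 1/2"
  show "gL (1/2) (1/2) (1/2) \<in> convex hull (P_Lplus - S)"
  proof (cases "str (V h h h)")
    case False
    then show ?thesis using memS okL_axes hull_inc unfolding h_def by metis
  next
    case True
    then have sV: "real_of_int p0 < V h h h" "V h h h < real_of_int p0 + 1" unfolding str_def by auto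
    show ?thesis
    proof (cases "\<bar>k1\<bar> \<ge> 2 \<or> (k2 = 0 \<and> k3 = 0)")
      case True
      have nn: "\<not> str (V 0 h h) \<and> \<not> str (V 1 h h)"
      proof (cases "\<bar>k1\<bar> \<ge> 2")
        case True
        have "V 1 h h = V h h h + of_int k1 / 2" "V 0 h h = V h h h - of_int k1 / 2"
          unfolding V_def h_def by (simp_all add: field_simps)
        moreover have "\<bar>real_of_int k1 / 2\<bar> \<ge> 1" using True by simp
        ultimately show ?thesis using far_not_strip[OF sV] unfolding str_def by metis
      next
        case False
        then have "k2 = 0" "k3 = 0" using \<open>\<bar>k1\<bar> \<ge> 2 \<or> (k2 = 0 \<and> k3 = 0)\<close> by auto
        then have "V 0 h h = of_int kb" "V 1 h h = of_int (kb + k1)" unfolding V_def by simp_all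
        then show ?thesis unfolding str_def using int_not_strip by metis
      qed
      show ?thesis by (rule pair[of 0 h h 1 h h]) (use nn okL_axes in \<open>auto simp: h_def\<close>)
    next
      case c1: False
      show ?thesis
      proof (cases "\<bar>k2\<bar> \<ge> 2 \<or> (k1 = 0 \<and> k3 = 0)")
        case True
        have nn: "\<not> str (V h 0 h) \<and> \<not> str (V h 1 h)"
        proof (cases "\<bar>k2\<bar> \<ge> 2")
          case True
          have "V h 1 h = V h h h + of_int k2 / 2" "V h 0 h = V h h h - of_int k2 / 2"
            unfolding V_def h_def by (simp_all add: field_simps)
          moreover have "\<bar>real_of_int k2 / 2\<bar> \<ge> 1" using True by simp
          ultimately show ?thesis using far_not_strip[OF sV] unfolding str_def by metis
        next
          case False
          then have "k1 = 0" "k3 = 0" using \<open>\<bar>k2\<bar> \<ge> 2 \<or> (k1 = 0 \<and> k3 = 0)\<close> by auto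
          then have "V h 0 h = of_int kb" "V h 1 h = of_int (kb + k2)" unfolding V_def by simp_all
          then show ?thesis unfolding str_def using int_not_strip by metis
        qed
        show ?thesis by (rule pair[of h 0 h h 1 h]) (use nn okL_axes in \<open>auto simp: h_def\<close>)
      next
        case c2: False
        show ?thesis
        proof (cases "\<bar>k3\<bar> \<ge> 2 \<or> (k1 = 0 \<and> k2 = 0)")
          case True
          have nn: "\<not> str (V h h 0) \<and> \<not> str (V h h 1)"
          proof (cases "\<bar>k3\<bar> \<ge> 2")
            case True
            have "V h h 1 = V h h h + of_int k3 / 2" "V h h 0 = V h h h - of_int k3 / 2"
              unfolding V_def h_def by (simp_all add: field_simps)
            moreover have "\<bar>real_of_int k3 / 2\<bar> \<ge> 1" using True by simp
            ultimately show ?thesis using far_not_strip[OF sV] unfolding str_def by metis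
          next
            case False
            then have "k1 = 0" "k2 = 0" using \<open>\<bar>k3\<bar> \<ge> 2 \<or> (k1 = 0 \<and> k2 = 0)\<close> by auto
            then have "V h h 0 = of_int kb" "V h h 1 = of_int (kb + k3)" unfolding V_def by simp_all
            then show ?thesis unfolding str_def using int_not_strip by metis
          qed
          show ?thesis by (rule pair[of h h 0 h h 1]) (use nn okL_axes in \<open>auto simp: h_def\<close>)
        next
          case c3: False
          have odd: "odd (k1 + k2 + k3)"
          proof
            assume "even (k1 + k2 + k3)"
            then obtain m where m: "k1 + k2 + k3 = 2 * m" by (rule evenE)
            have "V h h h = of_int (kb + m)"
            proof -
              have "V h h h = of_int kb + of_int (k1 + k2 + k3) / 2" unfolding V_def h_def by (simp add: field_simps)
              also have "\<dots> = of_int (kb + m)" unfolding m by simp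
              finally show ?thesis .
            qed
            then show False using sV int_not_strip by metis
          qed
          have z: "\<not>(k2 = 0 \<and> k3 = 0)" "\<not>(k1 = 0 \<and> k3 = 0)" "\<not>(k1 = 0 \<and> k2 = 0)"
            and b: "\<bar>k1\<bar> < 2" "\<bar>k2\<bar> < 2" "\<bar>k3\<bar> < 2" using c1 c2 c3 by auto
          from b have bb: "-1 \<le> k1" "k1 \<le> 1" "-1 \<le> k2" "k2 \<le> 1" "-1 \<le> k3" "k3 \<le> 1" by auto
          have ks: "k1 \<in> {-1, 1}" "k2 \<in> {-1, 1}" "k3 \<in> {-1, 1}" using z bb odd by (simp_all, presburger+)
          then have sq: "real_of_int k1 * of_int k1 = 1" "real_of_int k2 * of_int k2 = 1" "real_of_int k3 * of_int k3 = 1"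
            by auto
          obtain m where m: "k1 + k2 + k3 = 2 * m + 1" using odd by (rule oddE)
          have m': "real_of_int k1 + of_int k2 + of_int k3 = 2 * of_int m + 1"
            using arg_cong[OF m, of real_of_int] by simp
          have e1: "V (h + of_int k1 / 6) (h + of_int k2 / 6) (h + of_int k3 / 6) = of_int (kb + m + 1)"
          proof -
            have "V (h + of_int k1 / 6) (h + of_int k2 / 6) (h + of_int k3 / 6)
               = of_int kb + (of_int k1 + of_int k2 + of_int k3) / 2
                 + (of_int k1 * of_int k1 + of_int k2 * of_int k2 + of_int k3 * of_int k3) / 6"
              unfolding V_def h_def by (simp add: field_simps)
            also have "\<dots> = of_int (kb + m + 1)" unfolding sq m' by (simp add: field_simps)
            finally show ?thesis .
          qed
          have e2: "V (h - of_int k1 / 6) (h - of_int k2 / 6) (h - of_int k3 / 6) = of_int (kb + m)"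
          proof -
            have "V (h - of_int k1 / 6) (h - of_int k2 / 6) (h - of_int k3 / 6)
               = of_int kb + (of_int k1 + of_int k2 + of_int k3) / 2
                 - (of_int k1 * of_int k1 + of_int k2 * of_int k2 + of_int k3 * of_int k3) / 6"
              unfolding V_def h_def by (simp add: field_simps)
            also have "\<dots> = of_int (kb + m)" unfolding sq m' by (simp add: field_simps)
            finally show ?thesis .
          qed
          have ok1: "okL (h + of_int k1 / 6) (h + of_int k2 / 6) (h + of_int k3 / 6)"
            and ok2: "okL (h - of_int k1 / 6) (h - of_int k2 / 6) (h - of_int k3 / 6)"
            using okL_cube sign_cube[OF ks(1)] sign_cube[OF ks(2)] sign_cube[OF ks(3)] unfolding h_def by auto
          have n1: "\<not> str (V (h + of_int k1 / 6) (h + of_int k2 / 6) (h + of_int k3 / 6))"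
            unfolding e1 str_def by (rule int_not_strip)
          have n2: "\<not> str (V (h - of_int k1 / 6) (h - of_int k2 / 6) (h - of_int k3 / 6))"
            unfolding e2 str_def by (rule int_not_strip)
          show ?thesis
            by (rule pair[OF ok1 n1 ok2 n2]) (simp_all add: h_def)
        qed
      qed
    qed
  qed
qed


definition tmap :: "real^(3+3+(3\<times>3)) \<Rightarrow> real^(3+3+(3\<times>2))" where
  "tmap v = (\<chi> k. case k of Inl i \<Rightarrow> v$Inl i | Inr (Inl i) \<Rightarrow> v$Inr (Inl i)
     | Inr (Inr (i,j)) \<Rightarrow> (if j = 1 then v$Inr (Inr (i,1)) + v$Inr (Inr (i,3))
                           else v$Inr (Inr (i,2)) + v$Inr (Inr (i,3))))"

definition padj :: "real^(3+3+(3\<times>2)) \<Rightarrow> real^(3+3+(3\<times>3))" where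
  "padj p = (\<chi> k. case k of Inl i \<Rightarrow> p$Inl i | Inr (Inl i) \<Rightarrow> p$Inr (Inl i)
     | Inr (Inr (i,j)) \<Rightarrow> (if j = 1 then p$Inr (Inr (i,1)) else if j = 2 then p$Inr (Inr (i,2))
                           else p$Inr (Inr (i,1)) + p$Inr (Inr (i,2))))"

lemma tmap_inner: "p \<bullet> tmap v = padj p \<bullet> v"
  unfolding inner_exp tmap_def padj_def by (simp add: sum_3 sum_2 algebra_simps)

lemma padj_int: "\<forall>k. p$k \<in> \<int> \<Longrightarrow> \<forall>k. padj p $ k \<in> \<int>"
  unfolding padj_def by (auto split: sum.split intro: Ints_add)

lemma tmap_linear: "linear tmap"
  by (rule linearI) (auto simp: vec_eq_iff tmap_def algebra_simps split: sum.split)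

lemma tmap_mem: "v \<in> P_U \<Longrightarrow> tmap v \<in> P_Lplus"
  unfolding P_U_def P_Lplus_def inP_def xc_def yc_def zc_def tmap_def
  by (auto simp: forall_3 forall_2)

lemma tmap_proj: "proj_xy (tmap v) = proj_xy v"
  unfolding proj_xy_def xc_def yc_def tmap_def vec_eq_iff by (auto split: sum.split)

lemma tmap_SC: "v \<in> split_closure P_U \<Longrightarrow> tmap v \<in> split_closure P_Lplus"
  unfolding split_closure_def[of P_Lplus]
proof (intro InterI, clarsimp)
  fix p :: "real^(3+3+(3\<times>2))" and p0 :: int
  assume v: "v \<in> split_closure P_U" and pint: "\<forall>i. p $ i \<in> \<int>"
  have "v \<in> convex hull (P_U - {w. of_int p0 < padj p \<bullet> w \<and> padj p \<bullet> w < of_int p0 + 1})"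
    by (rule sc_mem[OF v padj_int[OF pint]])
  then have "tmap v \<in> tmap ` (convex hull (P_U - {w. of_int p0 < padj p \<bullet> w \<and> padj p \<bullet> w < of_int p0 + 1}))"
    by (rule imageI)
  also have "\<dots> = convex hull (tmap ` (P_U - {w. of_int p0 < padj p \<bullet> w \<and> padj p \<bullet> w < of_int p0 + 1}))"
    by (rule convex_hull_linear_image[OF tmap_linear])
  also have "\<dots> \<subseteq> convex hull (P_Lplus - {w. of_int p0 < p \<bullet> w \<and> p \<bullet> w < of_int p0 + 1})"
    by (rule hull_mono) (auto simp: tmap_inner tmap_mem)
  finally show "tmap v \<in> convex hull (P_Lplus - {w. of_int p0 < p \<bullet> w \<and> p \<bullet> w < of_int p0 + 1})" .
qed

theorem theorem5:
  shows "proj_xy ` split_closure P_U \<subset> proj_xy ` split_closure P_Lplus"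
proof (rule psubsetI)
  show "proj_xy ` split_closure P_U \<subseteq> proj_xy ` split_closure P_Lplus"
  proof
    fix u assume "u \<in> proj_xy ` split_closure P_U"
    then obtain v where v: "v \<in> split_closure P_U" "u = proj_xy v" by auto
    then have "u = proj_xy (tmap v)" by (simp add: tmap_proj)
    then show "u \<in> proj_xy ` split_closure P_Lplus" using tmap_SC[OF v(1)] by auto
  qed
  have inR: "proj_xy (gL (1/2) (1/2) (1/2)) \<in> proj_xy ` split_closure P_Lplus"
    using qL_SC by auto
  have notL: "proj_xy (gL (1/2) (1/2) (1/2)) \<notin> proj_xy ` split_closure P_U"
  proof
    assume "proj_xy (gL (1/2) (1/2) (1/2)) \<in> proj_xy ` split_closure P_U"
    then obtain v where v: "v \<in> split_closure P_U" "proj_xy v = proj_xy (gL (1/2) (1/2) (1/2))" by auto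
    have "yc v i = yc (gL (1/2) (1/2) (1/2)) i" for i
    proof -
      have "proj_xy v $ Inr i = proj_xy (gL (1/2) (1/2) (1/2)) $ Inr i" using v(2) by simp
      then show ?thesis unfolding proj_xy_def by simp
    qed
    then have "yc v 1 + yc v 2 + yc v 3 = 3/2" unfolding yc_def gL_def by simp
    then show False using SC_PU_ysum[OF v(1)] by simp
  qed
  show "proj_xy ` split_closure P_U \<noteq> proj_xy ` split_closure P_Lplus"
    using inR notL by auto
qed

end
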